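(* Let $k\ge2$ and $\exp_k(x)=\sum_{T\in\mathbb P}\alpha_Tx^T$. For every $T\in\mathbb P$ with $\deg(T)=n$ and every integer $m\ge0$, $$\frac{\alpha_T}{m!}=\sum_{U\in\mathbb P,\ \deg(U)=n+m}(U/T)\,\alpha_U .$$
   Context: Let $\mathbb P$ denote the set of finite planar reduced rooted trees (children of each vertex linearly ordered, no vertex with exactly one child), including the empty tree $\mathbf 1$ and the one-vertex tree $|$; $\deg(T)$ is the number of leaves, $L(T)$ the set of leaves. The algebra $\mathbb C\{x\}_{\mathbb P}$ has basis $\{x^T\}$, $x^{\mathbf 1}=1$, $x^|=x$, with $k$-linear operations $\omega_k$ ($k\ge2$), $\omega_k(x^{T_1},\dots,x^{T_k})=x^T$ where $T$ is obtained by attaching the nonempty $T_i$ in order as subtrees of the children of a new root (if exactly one is nonempty, $T$ is that one; if none, $T=\mathbf 1$). $\mathbb C\{\{x\}\}_{\mathbb P}$ is the algebra of formal series $\sum_T\gamma_Tx^T$. For $f=\sum\gamma_Tx^T$ and $c\in\mathbb C$, $f(cx)=\sum\gamma_Tc^{\deg T}x^T$. The $k$-ary exponential series $\exp_k(x)$ is the unique $f\in\mathbb C\{\{x\}\}_{\mathbb P}$ with $f=1+x+(\text{terms of degree}\ge2)$ and $\omega_k(f,\dots,f)=f(kx)$. Contraction $S|I$ for $I\subseteq L(S)$: the tree obtained from the subtree of $S$ spanned by the root-to-leaf paths to leaves in $I$ by suppressing all vertices with exactly one child; planar binomial coefficient $(S/T)=\#\{I\subseteq L(S):S|I=T\}$.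 *)

theory Defs
  imports Complex_Main
begin

text \<open>Planar rooted trees: a leaf, or an internal vertex with an ordered list of children.
  The empty tree 1 is represented by None in ptree option; a nonempty tree t by Some t.\<close>

datatype ptree = Leaf | Node "ptree list"

fun reduced :: "ptree \<Rightarrow> bool" where
  "reduced Leaf = True"
| "reduced (Node cs) = (2 \<le> length cs \<and> (\<forall>c\<in>set cs. reduced c))"

definition PT :: "ptree option set" where
  "PT = insert None (Some ` {t. reduced t})"

fun nleaves :: "ptree \<Rightarrow> nat" where
  "nleaves Leaf = 1"
| "nleaves (Node cs) = sum_list (map nleaves cs)"

definition deg :: "ptree option \<Rightarrow> nat" where
  "deg T = (case T of None \<Rightarrow> 0 | Some t \<Rightarrow> nleaves t)"

definition graft :: "ptree option list \<Rightarrow> ptree option" where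
  "graft ts = (let ne = [t. Some t \<leftarrow> ts] in
     (case ne of [] \<Rightarrow> None | [t] \<Rightarrow> Some t | _ \<Rightarrow> Some (Node ne)))"

text \<open>Formal series in C{{x}}_P: coefficient functions (coefficients outside P are required
  to vanish where relevant).\<close>
type_synonym series = "ptree option \<Rightarrow> complex"

text \<open>The k-ary operation omega_k, extended multilinearly to formal series
  (coefficient of x^T is a finite sum).\<close>
definition omega :: "nat \<Rightarrow> (nat \<Rightarrow> series) \<Rightarrow> series" where
  "omega k fs T = (\<Sum>ts\<in>{ts. length ts = k \<and> set ts \<subseteq> PT \<and> graft ts = T}.
                     \<Prod>i<k. fs i (ts ! i))"

text \<open>f(cx).\<close>
definition scale :: "complex \<Rightarrow> series \<Rightarrow> series" where
  "scale c f T = c ^ deg T * f T"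

definition exp_k :: "nat \<Rightarrow> series" where
  "exp_k k = (THE f. (\<forall>T. T \<notin> PT \<longrightarrow> f T = 0) \<and> f None = 1 \<and> f (Some Leaf) = 1 \<and>
                     (\<forall>T\<in>PT. omega k (\<lambda>_. f) T = scale (of_nat k) f T))"

text \<open>Leaves are addressed by paths (lists of child indices) from the root.\<close>
fun leaves :: "ptree \<Rightarrow> nat list set"
and leaves_list :: "nat \<Rightarrow> ptree list \<Rightarrow> nat list set" where
  "leaves Leaf = {[]}"
| "leaves (Node cs) = leaves_list 0 cs"
| "leaves_list i [] = {}"
| "leaves_list i (c # cs) = ((#) i ` leaves c) \<union> leaves_list (Suc i) cs"

definition L :: "ptree option \<Rightarrow> nat list set" where
  "L T = (case T of None \<Rightarrow> {} | Some t \<Rightarrow> leaves t)"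

fun restr :: "ptree \<Rightarrow> nat list set \<Rightarrow> ptree option"
and restr_list :: "nat \<Rightarrow> ptree list \<Rightarrow> nat list set \<Rightarrow> ptree option list" where
  "restr Leaf I = (if [] \<in> I then Some Leaf else None)"
| "restr (Node cs) I = graft (restr_list 0 cs I)"
| "restr_list i [] I = []"
| "restr_list i (c # cs) I = restr c {p. i # p \<in> I} # restr_list (Suc i) cs I"

definition contract :: "ptree option \<Rightarrow> nat list set \<Rightarrow> ptree option" where
  "contract S I = (case S of None \<Rightarrow> None | Some s \<Rightarrow> restr s I)"

definition pbinom :: "ptree option \<Rightarrow> ptree option \<Rightarrow> nat" where
  "pbinom S T = card {I. I \<subseteq> L S \<and> contract S I = T}"

end

theory Submission
  imports Defs
begin

lemma nleaves_pos: "reduced t \<Longrightarrow> 0 < nleaves t"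
proof (induction t)
  case Leaf then show ?case by simp
next
  case (Node cs)
  then obtain c cs' where cs: "cs = c # cs'" by (cases cs) auto
  with Node have "0 < nleaves c" by auto
  then show ?case using cs by simp
qed

lemma PT_iff: "T \<in> PT \<longleftrightarrow> (case T of None \<Rightarrow> True | Some t \<Rightarrow> reduced t)"
  by (cases T) (auto simp: PT_def)

lemma None_PT[simp]: "None \<in> PT" by (simp add: PT_def)
lemma Some_PT[simp]: "Some t \<in> PT \<longleftrightarrow> reduced t" by (auto simp: PT_def)

lemma deg_simps[simp]: "deg None = 0" "deg (Some t) = nleaves t" by (auto simp: deg_def)

lemma deg0: "T \<in> PT \<Longrightarrow> deg T = 0 \<longleftrightarrow> T = None"
  by (cases T) (auto dest: nleaves_pos)

lemma nleaves_ge2: "reduced (Node cs) \<Longrightarrow> 2 \<le> nleaves (Node cs)"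
proof -
  assume r: "reduced (Node cs)"
  then obtain a b r' where cs: "cs = a # b # r'"
    by (cases cs; cases "tl cs") auto
  with r have "0 < nleaves a" "0 < nleaves b" by (auto intro: nleaves_pos)
  then show ?thesis using cs by simp
qed

lemma deg1: "T \<in> PT \<Longrightarrow> deg T = 1 \<longleftrightarrow> T = Some Leaf"
proof
  assume "T \<in> PT" "deg T = 1"
  then show "T = Some Leaf"
  proof (cases T)
    case (Some t) then show ?thesis using \<open>T \<in> PT\<close> \<open>deg T = 1\<close>
      using nleaves_ge2 by (cases t) fastforce+
  qed auto
qed auto

lemma child_lt: "reduced (Node cs) \<Longrightarrow> c \<in> set cs \<Longrightarrow> nleaves c < nleaves (Node cs)"
proof -
  assume r: "reduced (Node cs)" and c: "c \<in> set cs"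
  then obtain xs ys where cs: "cs = xs @ c # ys" by (metis split_list)
  have "xs @ ys \<noteq> []" using r cs by auto
  then obtain d where d: "d \<in> set (xs @ ys)" by (cases "xs @ ys") auto
  then have "reduced d" using r cs by auto
  then have "0 < nleaves d" by (rule nleaves_pos)
  moreover have "nleaves d \<le> sum_list (map nleaves (xs @ ys))"
    by (intro member_le_sum_list) (use d in auto)
  moreover have "nleaves (Node cs) = nleaves c + sum_list (map nleaves (xs @ ys))" using cs by simp
  ultimately show ?thesis by linarith
qed

definition filt :: "ptree option list \<Rightarrow> ptree list" where
  "filt ts = [t. Some t \<leftarrow> ts]"

lemma filt_simps[simp]: "filt [] = []" "filt (None # ts) = filt ts" "filt (Some t # ts) = t # filt ts"
  "filt (xs @ ys) = filt xs @ filt ys"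
  by (auto simp: filt_def)

lemma graft_filt: "graft ts = (case filt ts of [] \<Rightarrow> None | [t] \<Rightarrow> Some t | _ \<Rightarrow> Some (Node (filt ts)))"
  unfolding graft_def filt_def Let_def by (rule refl)

lemma graft_cong: assumes h: "filt ts = filt ts'" shows "graft ts = graft ts'"
  unfolding graft_filt h ..

lemma deg_filt: "sum_list (map deg ts) = sum_list (map nleaves (filt ts))"
proof (induction ts)
  case (Cons a ts) thus ?case by (cases a) auto
qed simp

lemma deg_graft: "deg (graft ts) = sum_list (map deg ts)"
proof -
  have "deg (graft ts) = sum_list (map nleaves (filt ts))"
    unfolding graft_filt by (auto split: list.split)
  then show ?thesis by (simp add: deg_filt)
qed

lemma set_filt: "set ts \<subseteq> PT \<Longrightarrow> t \<in> set (filt ts) \<Longrightarrow> reduced t"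
proof (induction ts)
  case (Cons a ts) thus ?case by (cases a) auto
qed simp

lemma graft_PT: "set ts \<subseteq> PT \<Longrightarrow> graft ts \<in> PT"
  unfolding graft_filt using set_filt[of ts]
  by (auto split: list.split)

lemma length_le_sum: "(\<forall>x\<in>set xs. 0 < f x) \<Longrightarrow> length xs \<le> sum_list (map f xs)"
  by (induction xs) (auto simp: Suc_le_eq add_pos_nonneg)

lemma finite_reduced: "finite {t. reduced t \<and> nleaves t \<le> N}"
proof (induction N)
  case 0
  have "{t. reduced t \<and> nleaves t \<le> 0} = {}" using nleaves_pos by fastforce
  then show ?case by (metis finite.emptyI)
next
  case (Suc N)
  let ?S = "{t. reduced t \<and> nleaves t \<le> N}"
  have "{t. reduced t \<and> nleaves t \<le> Suc N} \<subseteq> insert Leaf (Node ` {cs. set cs \<subseteq> ?S \<and> length cs \<le> Suc N})"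
  proof
    fix t assume t: "t \<in> {t. reduced t \<and> nleaves t \<le> Suc N}"
    show "t \<in> insert Leaf (Node ` {cs. set cs \<subseteq> ?S \<and> length cs \<le> Suc N})"
    proof (cases t)
      case (Node cs)
      have "set cs \<subseteq> ?S"
      proof
        fix c assume c: "c \<in> set cs"
        have "nleaves c < nleaves t" using child_lt[of cs c] t Node c by auto
        then show "c \<in> ?S" using t Node c by auto
      qed
      moreover have "length cs \<le> Suc N"
        using length_le_sum[of cs nleaves] t Node nleaves_pos by auto
      ultimately show ?thesis using Node by auto
    qed auto
  qed
  moreover have "finite {cs. set cs \<subseteq> ?S \<and> length cs \<le> Suc N}"
    by (rule finite_lists_length_le[OF Suc])
  ultimately show ?case using finite_subset by blast
qed

lemma finite_PT_deg: "finite {U \<in> PT. deg U \<le> N}"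
proof -
  have "{U \<in> PT. deg U \<le> N} \<subseteq> insert None (Some ` {t. reduced t \<and> nleaves t \<le> N})"
    by (auto simp: PT_def)
  then show ?thesis using finite_reduced[of N] finite_subset by blast
qed

lemma finite_PT_deg_eq: "finite {U \<in> PT. deg U = N}"
  by (rule finite_subset[OF _ finite_PT_deg[of N]]) auto

lemma card_filter_lists:
  "z \<notin> set cs \<Longrightarrow> finite {xs. length xs = k \<and> filter (\<lambda>x. x \<noteq> z) xs = cs} \<and>
     card {xs. length xs = k \<and> filter (\<lambda>x. x \<noteq> z) xs = cs} = k choose length cs"
proof (induction k arbitrary: cs)
  case 0
  have "{xs. length xs = 0 \<and> filter (\<lambda>x. x \<noteq> z) xs = cs} = (if cs = [] then {[]} else {})" by auto
  then show ?case by (cases cs) auto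
next
  case (Suc k)
  let ?A = "\<lambda>cs. {xs. length xs = k \<and> filter (\<lambda>x. x \<noteq> z) xs = cs}"
  show ?case
  proof (cases cs)
    case Nil
    have "{xs. length xs = Suc k \<and> filter (\<lambda>x. x \<noteq> z) xs = cs} = Cons z ` ?A cs"
      using Nil by (auto simp: length_Suc_conv split: if_splits)
    then show ?thesis using Suc.IH[of cs] Suc.prems Nil by (simp add: card_image)
  next
    case (Cons c cs')
    have "{xs. length xs = Suc k \<and> filter (\<lambda>x. x \<noteq> z) xs = cs} = Cons z ` ?A cs \<union> Cons c ` ?A cs'"
      using Cons Suc.prems by (auto simp: length_Suc_conv split: if_splits)
    moreover have "Cons z ` ?A cs \<inter> Cons c ` ?A cs' = {}" using Cons Suc.prems by auto
    moreover have "finite (?A cs)" "finite (?A cs')" "card (?A cs) = k choose length cs"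
       "card (?A cs') = k choose length cs'"
      using Suc.IH[of cs] Suc.IH[of cs'] Suc.prems Cons by auto
    ultimately show ?thesis using Cons
      by (simp add: card_Un_disjoint card_image)
  qed
qed

definition nz :: "ptree option \<times> nat \<Rightarrow> bool" where "nz z = (z \<noteq> (None, 0))"

definition ZS :: "nat \<Rightarrow> ptree option \<Rightarrow> nat \<Rightarrow> (ptree option \<times> nat) list set" where
  "ZS k T m = {zs. length zs = k \<and> set (map fst zs) \<subseteq> PT \<and> graft (map fst zs) = T \<and> sum_list (map snd zs) = m}"

definition Om :: "nat \<Rightarrow> (ptree option \<Rightarrow> nat \<Rightarrow> complex) \<Rightarrow> ptree option \<Rightarrow> nat \<Rightarrow> complex" where
  "Om k H T m = (\<Sum>zs\<in>ZS k T m. prod_list (map (\<lambda>(t,j). H t j) zs))"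

lemma filt_nz: "filt (map fst (filter nz zs)) = filt (map fst zs)"
proof (induction zs)
  case (Cons z zs) then show ?case by (cases z; cases "fst z") (auto simp: nz_def)
qed simp

lemma sum_nz: "sum_list (map snd (filter nz zs)) = sum_list (map snd zs)"
  by (induction zs) (auto simp: nz_def)

lemma prod_nz: "F (None, 0) = 1 \<Longrightarrow> prod_list (map F (filter nz zs)) = prod_list (map F zs)"
  by (induction zs) (auto simp: nz_def)

lemma graft_single[simp]: "graft [T] = T"
  by (cases T) (auto simp: graft_filt)

lemma graft_nz: "graft (map fst zs) = graft (map fst (filter nz zs))"
  by (rule graft_cong) (simp add: filt_nz)

lemma weight_sum: "zs \<in> ZS k T m \<Longrightarrow> sum_list (map (\<lambda>z. deg (fst z) + snd z) zs) = deg T + m"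
  unfolding ZS_def by (auto simp: sum_list_addf deg_graft o_def)

lemma finite_ZS: "finite (ZS k T m)"
proof -
  let ?B = "{zs. set zs \<subseteq> {U \<in> PT. deg U \<le> deg T + m} \<times> {..deg T + m} \<and> length zs = k}"
  have "ZS k T m \<subseteq> ?B"
  proof
    fix zs assume zs: "zs \<in> ZS k T m"
    have "set zs \<subseteq> {U \<in> PT. deg U \<le> deg T + m} \<times> {..deg T + m}"
    proof
      fix z assume z: "z \<in> set zs"
      have "deg (fst z) + snd z \<in> set (map (\<lambda>z. deg (fst z) + snd z) zs)" using z by simp
      then have "deg (fst z) + snd z \<le> deg T + m"
        using member_le_sum_list[of _ "map (\<lambda>z. deg (fst z) + snd z) zs"] weight_sum[OF zs] by simp
      moreover have "fst z \<in> PT" using zs z unfolding ZS_def by auto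
      ultimately show "z \<in> {U \<in> PT. deg U \<le> deg T + m} \<times> {..deg T + m}"
        by (cases z) simp
    qed
    moreover have "length zs = k" using zs unfolding ZS_def by simp
    ultimately show "zs \<in> ?B" by simp
  qed
  moreover have "finite ?B"
    by (intro finite_lists_length_eq finite_cartesian_product finite_PT_deg finite_atMost)
  ultimately show ?thesis by (rule finite_subset)
qed

lemma weight_lt:
  assumes zs: "zs \<in> ZS k T m" and z: "z \<in> set zs" and N: "1 \<le> deg T + m"
    and nlt: "\<not> deg (fst z) + snd z < deg T + m"
  shows "filter nz zs = [(T, m)]"
proof -
  define w where "w = (\<lambda>z :: ptree option \<times> nat. deg (fst z) + snd z)"
  obtain xs ys where zs_eq: "zs = xs @ z # ys" using z by (metis split_list)
  have s: "sum_list (map w zs) = deg T + m" using weight_sum[OF zs] by (simp add: w_def)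
  moreover have "sum_list (map w zs) = sum_list (map w xs) + w z + sum_list (map w ys)" using zs_eq by simp
  moreover have "\<not> w z < deg T + m" using nlt by (simp add: w_def)
  ultimately have "sum_list (map w xs) = 0" "sum_list (map w ys) = 0" by linarith+
  then have 0: "\<forall>x\<in>set xs \<union> set ys. w x = 0" by auto
  have PTs: "\<forall>x\<in>set zs. fst x \<in> PT" using zs unfolding ZS_def by auto
  have "\<forall>x\<in>set xs \<union> set ys. \<not> nz x"
  proof
    fix x assume x: "x \<in> set xs \<union> set ys"
    then have "fst x \<in> PT" using PTs zs_eq by auto
    moreover have "w x = 0" using 0 x by blast
    ultimately have "fst x = None" "snd x = 0" using deg0[of "fst x"] by (auto simp: w_def)
    then show "\<not> nz x" by (cases x) (auto simp: nz_def)
  qed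
  moreover have "nz z" using nlt N by (auto simp: nz_def)
  ultimately have f: "filter nz zs = [z]" using zs_eq by auto
  have "T = fst z" using zs graft_nz[of zs] f unfolding ZS_def by auto
  moreover have "m = snd z" using zs sum_nz[of zs] f unfolding ZS_def by auto
  ultimately show ?thesis using f by auto
qed

definition G1 :: "nat \<Rightarrow> ptree option \<Rightarrow> nat \<Rightarrow> (ptree option \<times> nat) list set" where
  "G1 k T m = {zs. length zs = k \<and> filter nz zs = [(T,m)]}"

lemma G1_sub: assumes "T \<in> PT" shows "G1 k T m \<subseteq> ZS k T m"
proof
  fix zs assume zs: "zs \<in> G1 k T m"
  then have f: "filter nz zs = [(T,m)]" and l: "length zs = k" by (auto simp: G1_def)
  have "graft (map fst zs) = T" using graft_nz[of zs] f by simp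
  moreover have "sum_list (map snd zs) = m" using sum_nz[of zs] f by simp
  moreover have "set (map fst zs) \<subseteq> PT"
  proof
    fix t assume "t \<in> set (map fst zs)"
    then obtain z where z: "z \<in> set zs" "t = fst z" by auto
    show "t \<in> PT"
    proof (cases "nz z")
      case True
      then have "z \<in> set (filter nz zs)" using z by simp
      then show ?thesis using f z assms by simp
    next
      case False then show ?thesis using z by (auto simp: nz_def)
    qed
  qed
  ultimately show "zs \<in> ZS k T m" using l by (simp add: ZS_def)
qed

lemma card_G1: assumes "1 \<le> deg T + m" shows "finite (G1 k T m) \<and> card (G1 k T m) = k"
proof -
  have "(None, 0) \<notin> set [(T, m)]" using assms by auto
  from card_filter_lists[OF this, of k] show ?thesis
    unfolding G1_def nz_def by simp
qed

lemma Om_split: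
  assumes N: "2 \<le> deg T + m" and T: "T \<in> PT" and H0: "H None 0 = 1"
  shows "Om k H T m = of_nat k * H T m +
     (\<Sum>zs \<in> ZS k T m - G1 k T m. prod_list (map (\<lambda>(t,j). H t j) zs))"
proof -
  let ?F = "\<lambda>zs. prod_list (map (\<lambda>(t,j). H t j) zs)"
  have "Om k H T m = sum ?F (ZS k T m - G1 k T m) + sum ?F (G1 k T m)"
    unfolding Om_def by (rule sum.subset_diff[OF G1_sub[OF T] finite_ZS])
  moreover have "sum ?F (G1 k T m) = of_nat k * H T m"
  proof -
    have "sum ?F (G1 k T m) = sum (\<lambda>_. H T m) (G1 k T m)"
    proof (rule sum.cong)
      fix zs assume "zs \<in> G1 k T m"
      then have f: "filter nz zs = [(T,m)]" by (simp add: G1_def)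
      have "?F zs = prod_list (map (\<lambda>(t,j). H t j) (filter nz zs))"
        by (rule prod_nz[symmetric]) (simp add: H0)
      then show "?F zs = H T m" using f by simp
    qed simp
    then show ?thesis using card_G1[of T m k] N by simp
  qed
  ultimately show ?thesis by simp
qed

lemma pow_ne: assumes "2 \<le> k" "2 \<le> N" shows "(of_nat k :: complex) ^ N \<noteq> of_nat k"
proof -
  have "k ^ 1 < k ^ N" using assms by (intro power_strict_increasing) auto
  then have "k ^ N \<noteq> k" by simp
  then show ?thesis by (metis of_nat_eq_iff of_nat_power)
qed

lemma Om_unique:
  assumes k: "2 \<le> k"
    and eqH: "\<And>T m. T \<in> PT \<Longrightarrow> Om k H T m = of_nat k ^ (deg T + m) * H T m"
    and eqH': "\<And>T m. T \<in> PT \<Longrightarrow> Om k H' T m = of_nat k ^ (deg T + m) * H' T m"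
    and b1: "H None 0 = 1" "H (Some Leaf) 0 = 1" "H None 1 = 1"
    and b2: "H' None 0 = 1" "H' (Some Leaf) 0 = 1" "H' None 1 = 1"
    and T: "T \<in> PT"
  shows "H T m = H' T m"
proof -
  have "\<forall>T m. T \<in> PT \<longrightarrow> deg T + m = N \<longrightarrow> H T m = H' T m" for N
  proof (induction N rule: less_induct)
    case (less N)
    show ?case
    proof (intro allI impI)
      fix T m assume T: "T \<in> PT" and TN: "deg T + m = N"
      consider "N = 0" | "N = 1" | "2 \<le> N" by linarith
      then show "H T m = H' T m"
      proof cases
        case 1
        then have "T = None" "m = 0" using TN deg0[OF T] by auto
        then show ?thesis using b1 b2 by simp
      next
        case 2
        then have "(deg T = 0 \<and> m = 1) \<or> (deg T = 1 \<and> m = 0)" using TN by auto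
        then have "(T = None \<and> m = 1) \<or> (T = Some Leaf \<and> m = 0)" using deg0[OF T] deg1[OF T] by auto
        then show ?thesis using b1 b2 by auto
      next
        case 3
        let ?R = "\<lambda>H. (\<Sum>zs \<in> ZS k T m - G1 k T m. prod_list (map (\<lambda>(t,j). H t j) zs))"
        have R: "?R H = ?R H'"
        proof (rule sum.cong)
          fix zs assume zs: "zs \<in> ZS k T m - G1 k T m"
          show "prod_list (map (\<lambda>(t,j). H t j) zs) = prod_list (map (\<lambda>(t,j). H' t j) zs)"
          proof (rule arg_cong[where f = prod_list], rule map_cong)
            fix z assume z: "z \<in> set zs"
            have lt: "deg (fst z) + snd z < N"
            proof (rule ccontr)
              assume "\<not> deg (fst z) + snd z < N"
              then have "filter nz zs = [(T,m)]"
                using weight_lt[of zs k T m z] zs z TN 3 by auto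
              then show False using zs by (auto simp: G1_def ZS_def)
            qed
            have "fst z \<in> PT" using zs z by (auto simp: ZS_def)
            then have "H (fst z) (snd z) = H' (fst z) (snd z)" using less.IH[OF lt] by blast
            then show "(\<lambda>(t,j). H t j) z = (\<lambda>(t,j). H' t j) z" by (cases z) simp
          qed simp
        qed simp
        have e1: "of_nat k ^ N * H T m = of_nat k * H T m + ?R H"
          using eqH[OF T] Om_split[of T m H k] T TN 3 b1 by simp
        have e2: "of_nat k ^ N * H' T m = of_nat k * H' T m + ?R H'"
          using eqH'[OF T] Om_split[of T m H' k] T TN 3 b2 by simp
        have "(of_nat k ^ N - of_nat k) * (H T m - H' T m) = 0"
          using e1 e2 R by (simp add: algebra_simps)
        then show ?thesis using pow_ne[OF k 3] by simp
      qed
    qed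
  qed
  then show ?thesis using T by blast
qed

lemma prod_list_nth: "prod_list (map f xs) = (\<Prod>i<length xs. f (xs ! i))"
proof (induction xs)
  case (Cons x xs)
  then show ?case by (simp add: prod.lessThan_Suc_shift del: prod.lessThan_Suc)
qed simp

definition TS :: "nat \<Rightarrow> ptree option \<Rightarrow> ptree option list set" where
  "TS k T = {ts. length ts = k \<and> set ts \<subseteq> PT \<and> graft ts = T}"

lemma omega_list: "omega k (\<lambda>_. f) T = (\<Sum>ts\<in>TS k T. prod_list (map f ts))"
  unfolding omega_def TS_def by (rule sum.cong) (auto simp: prod_list_nth)

definition MS :: "nat \<Rightarrow> nat \<Rightarrow> nat list set" where
  "MS k m = {ms. length ms = k \<and> sum_list ms = m}"

lemma MS_0: "MS 0 m = (if m = 0 then {[]} else {})" by (auto simp: MS_def)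

lemma MS_Suc: "MS (Suc k) m = (\<lambda>(j,ms). j # ms) ` (SIGMA j:{..m}. MS k (m - j))"
proof -
  have "ms \<in> (\<lambda>(j,ms). j # ms) ` (SIGMA j:{..m}. MS k (m - j))" if "ms \<in> MS (Suc k) m" for ms
  proof -
    from that obtain j ms' where "ms = j # ms'" "length ms' = k" "j + sum_list ms' = m"
      by (auto simp: MS_def length_Suc_conv)
    then show ?thesis by (auto simp: MS_def image_iff intro!: bexI[of _ "(j, ms')"])
  qed
  then show ?thesis by (auto simp: MS_def)
qed

lemma finite_MS: "finite (MS k m)"
proof (induction k arbitrary: m)
  case 0 then show ?case by (simp add: MS_0)
next
  case (Suc k) then show ?case by (simp add: MS_Suc)
qed

lemma multinomial:
  "(\<Sum>ms\<in>MS k m. prod_list (map (\<lambda>j. 1 / fact j) ms)) = (of_nat k ^ m / fact m :: complex)"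
proof (induction k arbitrary: m)
  case 0 then show ?case by (simp add: MS_0)
next
  case (Suc k)
  have inj: "inj_on (\<lambda>(j,ms). j # ms) (SIGMA j:{..m}. MS k (m - j))"
    by (auto simp: inj_on_def)
  have "(\<Sum>ms\<in>MS (Suc k) m. prod_list (map (\<lambda>j. 1 / fact j) ms)) =
        (\<Sum>(j,ms)\<in>(SIGMA j:{..m}. MS k (m - j)). (1 / fact j) * prod_list (map (\<lambda>j. 1 / fact j) ms) :: complex)"
    unfolding MS_Suc by (subst sum.reindex[OF inj]) (simp add: case_prod_unfold)
  also have "\<dots> = (\<Sum>j\<le>m. (1 / fact j) * (\<Sum>ms\<in>MS k (m - j). prod_list (map (\<lambda>j. 1 / fact j) ms)))"
    by (subst sum.Sigma[symmetric]) (auto simp: finite_MS sum_distrib_left)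
  also have "\<dots> = (\<Sum>j\<le>m. (1 / fact j) * (of_nat k ^ (m - j) / fact (m - j)))"
    using Suc.IH by simp
  also have "\<dots> = (\<Sum>j\<le>m. of_nat (m choose j) * 1 ^ j * of_nat k ^ (m - j)) / fact m"
    unfolding sum_divide_distrib
  proof (rule sum.cong)
    fix j assume "j \<in> {..m}"
    then have "j \<le> m" by simp
    then show "1 / fact j * (of_nat k ^ (m - j) / fact (m - j)) =
      of_nat (m choose j) * 1 ^ j * of_nat k ^ (m - j) / (fact m :: complex)"
      by (simp add: binomial_fact field_simps)
  qed simp
  also have "\<dots> = (1 + of_nat k) ^ m / fact m"
    by (simp add: binomial_ring)
  finally show ?case by (simp add: add.commute)
qed

lemma prod_zip: "length ts = length ms \<Longrightarrow>
  prod_list (map (\<lambda>(t,j). f t / fact j) (zip ts ms)) =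
  prod_list (map f ts) * (prod_list (map (\<lambda>j. 1 / fact j) ms) :: complex)"
  by (induction ts ms rule: list_induct2) auto

lemma ZS_zip: "ZS k T m = (\<lambda>(ts,ms). zip ts ms) ` (TS k T \<times> MS k m)"
proof
  show "ZS k T m \<subseteq> (\<lambda>(ts,ms). zip ts ms) ` (TS k T \<times> MS k m)"
  proof
    fix zs assume "zs \<in> ZS k T m"
    then have "(map fst zs, map snd zs) \<in> TS k T \<times> MS k m"
      by (auto simp: ZS_def TS_def MS_def)
    moreover have "zs = zip (map fst zs) (map snd zs)" by (simp add: zip_map_fst_snd)
    ultimately show "zs \<in> (\<lambda>(ts,ms). zip ts ms) ` (TS k T \<times> MS k m)"
      by (auto simp: image_iff intro!: bexI[of _ "(map fst zs, map snd zs)"])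
  qed
qed (auto simp: ZS_def TS_def MS_def dest: set_zip_leftD)

lemma zip_inj: "length ts = length ms \<Longrightarrow> length ts' = length ms' \<Longrightarrow> zip ts ms = zip ts' ms' \<Longrightarrow> ts = ts' \<and> ms = ms'"
  by (metis map_fst_zip map_snd_zip)

lemma Om_fact:
  assumes om: "\<And>T. T \<in> PT \<Longrightarrow> omega k (\<lambda>_. f) T = of_nat k ^ deg T * f T" and T: "T \<in> PT"
  shows "Om k (\<lambda>t j. f t / fact j) T m = of_nat k ^ (deg T + m) * (f T / fact m)"
proof -
  have inj: "inj_on (\<lambda>(ts,ms). zip ts ms) (TS k T \<times> MS k m)"
  proof (rule inj_onI)
    fix x y assume "x \<in> TS k T \<times> MS k m" "y \<in> TS k T \<times> MS k m"
      "(\<lambda>(ts,ms). zip ts ms) x = (\<lambda>(ts,ms). zip ts ms) y"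
    then show "x = y"
      by (cases x; cases y) (auto simp: TS_def MS_def, (metis zip_inj)+)
  qed
  have "Om k (\<lambda>t j. f t / fact j) T m =
    (\<Sum>(ts,ms)\<in>TS k T \<times> MS k m. prod_list (map f ts) * prod_list (map (\<lambda>j. 1 / fact j) ms))"
    unfolding Om_def ZS_zip
    by (subst sum.reindex[OF inj]) (auto simp: TS_def MS_def prod_zip intro!: sum.cong)
  also have "\<dots> = (\<Sum>ts\<in>TS k T. prod_list (map f ts)) * (\<Sum>ms\<in>MS k m. prod_list (map (\<lambda>j. 1 / fact j) ms))"
    by (simp add: sum_product sum.cartesian_product)
  also have "\<dots> = of_nat k ^ deg T * f T * (of_nat k ^ m / fact m)"
    using om[OF T] by (simp add: omega_list multinomial)
  finally show ?thesis by (simp add: power_add)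
qed

definition FS :: "nat \<Rightarrow> ptree list \<Rightarrow> ptree option list set" where
  "FS k cs = {ts. length ts = k \<and> filt ts = cs}"

lemma filter_None: "filter (\<lambda>x. x \<noteq> None) ts = map Some (filt ts)"
proof (induction ts)
  case (Cons a ts) then show ?case by (cases a) auto
qed simp

lemma card_FS: "finite (FS k cs) \<and> card (FS k cs) = k choose length cs"
proof -
  have e: "(filter (\<lambda>x. x \<noteq> None) ts = map Some cs) = (filt ts = cs)" for ts
    unfolding filter_None by (simp add: inj_map_eq_map inj_def)
  have "FS k cs = {ts. length ts = k \<and> filter (\<lambda>x. x \<noteq> None) ts = map Some cs}"
    unfolding FS_def e ..
  moreover have "None \<notin> set (map Some cs)" by auto
  ultimately show ?thesis using card_filter_lists[of None "map Some cs" k] by simp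
qed

lemma PT_filt: "set ts \<subseteq> PT \<longleftrightarrow> (\<forall>t\<in>set (filt ts). reduced t)"
proof (induction ts)
  case (Cons a ts) then show ?case by (cases a) auto
qed simp

lemma prod_filt: "f None = 1 \<Longrightarrow> prod_list (map f ts) = prod_list (map (\<lambda>t. f (Some t)) (filt ts))"
proof (induction ts)
  case (Cons a ts) then show ?case by (cases a) auto
qed simp

fun alpha :: "nat \<Rightarrow> ptree \<Rightarrow> complex" where
  "alpha k Leaf = 1"
| "alpha k (Node cs) = of_nat (card (FS k cs)) / (of_nat k ^ nleaves (Node cs) - of_nat k)
     * prod_list (map (alpha k) cs)"

definition A :: "nat \<Rightarrow> ptree option \<Rightarrow> complex" where
  "A k T = (case T of None \<Rightarrow> 1 | Some t \<Rightarrow> if reduced t then alpha k t else 0)"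

lemma graft_eq_Some: "graft ts = Some t \<longleftrightarrow> filt ts = [t] \<or> (\<exists>cs. t = Node cs \<and> filt ts = cs \<and> 2 \<le> length cs)"
  unfolding graft_filt
  by (cases "filt ts" rule: remdups_adj.cases) auto

lemma graft_eq_None: "graft ts = None \<longleftrightarrow> filt ts = []"
  unfolding graft_filt by (cases "filt ts" rule: remdups_adj.cases) auto

lemma A_omega:
  assumes k: "2 \<le> k" and T: "T \<in> PT"
  shows "omega k (\<lambda>_. A k) T = of_nat k ^ deg T * A k T"
proof -
  have A0: "A k None = 1" by (simp add: A_def)
  have om: "omega k (\<lambda>_. A k) T = (\<Sum>ts\<in>TS k T. prod_list (map (\<lambda>t. A k (Some t)) (filt ts)))"
    unfolding omega_list using prod_filt[of "A k", OF A0] by simp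
  show ?thesis
  proof (cases T)
    case None
    have "TS k T = FS k []" using None by (auto simp: TS_def FS_def graft_eq_None PT_filt)
    then show ?thesis using om None card_FS[of k "[]"] by (simp add: FS_def A_def)
  next
    case (Some t)
    have red: "reduced t" using T Some by simp
    show ?thesis
    proof (cases t)
      case Leaf
      have "TS k T = FS k [Leaf]" using Some Leaf
        by (auto simp: TS_def FS_def graft_eq_Some PT_filt)
      then have "omega k (\<lambda>_. A k) T = of_nat (card (FS k [Leaf]))"
        using om Some Leaf by (simp add: FS_def A_def)
      then show ?thesis using card_FS[of k "[Leaf]"] Some Leaf by (simp add: A_def)
    next
      case (Node cs)
      have l: "2 \<le> length cs" and rc: "\<forall>c\<in>set cs. reduced c" using red Node by auto
      have TS: "TS k T = FS k [t] \<union> FS k cs" using Some Node l red rc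
        by (auto simp: TS_def FS_def graft_eq_Some PT_filt)
      have disj: "FS k [t] \<inter> FS k cs = {}" using l by (auto simp: FS_def)
      have s1: "(\<Sum>ts\<in>FS k [t]. prod_list (map (\<lambda>t. A k (Some t)) (filt ts))) = of_nat k * alpha k t"
      proof -
        have "(\<Sum>ts\<in>FS k [t]. prod_list (map (\<lambda>t. A k (Some t)) (filt ts))) = (\<Sum>ts\<in>FS k [t]. alpha k t)"
          by (rule sum.cong) (auto simp: FS_def A_def red)
        then show ?thesis using card_FS[of k "[t]"] by simp
      qed
      have s2: "(\<Sum>ts\<in>FS k cs. prod_list (map (\<lambda>t. A k (Some t)) (filt ts))) =
          of_nat (card (FS k cs)) * prod_list (map (alpha k) cs)"
      proof -
        have eq: "map (\<lambda>t. A k (Some t)) cs = map (alpha k) cs" using rc by (auto simp: A_def)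
        have "(\<Sum>ts\<in>FS k cs. prod_list (map (\<lambda>t. A k (Some t)) (filt ts))) =
            (\<Sum>ts\<in>FS k cs. prod_list (map (alpha k) cs))"
        proof (rule sum.cong[OF refl])
          fix ts assume "ts \<in> FS k cs"
          then have "filt ts = cs" by (simp add: FS_def)
          then show "prod_list (map (\<lambda>t. A k (Some t)) (filt ts)) = prod_list (map (alpha k) cs)"
            using eq by (simp only:)
        qed
        then show ?thesis by simp
      qed
      have n2: "2 \<le> nleaves t" using nleaves_ge2 red Node by blast
      have ne: "(of_nat k :: complex) ^ nleaves t - of_nat k \<noteq> 0" using pow_ne[OF k n2] by simp
      have "omega k (\<lambda>_. A k) T = of_nat k * alpha k t + of_nat (card (FS k cs)) * prod_list (map (alpha k) cs)"
        using om TS disj s1 s2 card_FS[of k "[t]"] card_FS[of k cs] by (simp add: sum.union_disjoint)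
      also have "of_nat (card (FS k cs)) * prod_list (map (alpha k) cs) =
          (of_nat k ^ nleaves t - of_nat k) * alpha k t"
        using ne Node by simp
      finally have "omega k (\<lambda>_. A k) T = of_nat k ^ nleaves t * alpha k t" by (simp add: algebra_simps)
      moreover have "A k T = alpha k t" using Some red by (simp add: A_def)
      ultimately show ?thesis using Some by simp
    qed
  qed
qed

definition Pexp :: "nat \<Rightarrow> series \<Rightarrow> bool" where
  "Pexp k f = ((\<forall>T. T \<notin> PT \<longrightarrow> f T = 0) \<and> f None = 1 \<and> f (Some Leaf) = 1 \<and>
                     (\<forall>T\<in>PT. omega k (\<lambda>_. f) T = scale (of_nat k) f T))"

lemma Pexp_unique:
  assumes k: "2 \<le> k" and f: "Pexp k f" and g: "Pexp k g" shows "f = g"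
proof
  fix T
  show "f T = g T"
  proof (cases "T \<in> PT")
    case True
    have omf: "\<And>T. T \<in> PT \<Longrightarrow> omega k (\<lambda>_. f) T = of_nat k ^ deg T * f T"
      using f by (simp add: Pexp_def scale_def)
    have omg: "\<And>T. T \<in> PT \<Longrightarrow> omega k (\<lambda>_. g) T = of_nat k ^ deg T * g T"
      using g by (simp add: Pexp_def scale_def)
    have "(\<lambda>t j. f t / fact j) T 0 = (\<lambda>t j. g t / fact j) T 0"
      by (rule Om_unique[OF k Om_fact[OF omf] Om_fact[OF omg]]) (use f g True in \<open>auto simp: Pexp_def\<close>)
    then show ?thesis by simp
  next
    case False then show ?thesis using f g by (simp add: Pexp_def)
  qed
qed

lemma Pexp_A: "2 \<le> k \<Longrightarrow> Pexp k (A k)"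
  unfolding Pexp_def scale_def using A_omega by (auto simp: A_def PT_iff split: option.split)

lemma exp_k_P: assumes "2 \<le> k" shows "Pexp k (exp_k k)"
proof -
  have "\<exists>!f. Pexp k f" using Pexp_A[OF assms] Pexp_unique[OF assms] by blast
  then show ?thesis unfolding exp_k_def Pexp_def[symmetric] by (rule theI')
qed

lemma exp_omega: assumes "2 \<le> k" "T \<in> PT"
  shows "omega k (\<lambda>_. exp_k k) T = of_nat k ^ deg T * exp_k k T"
  using exp_k_P[OF assms(1)] assms(2) by (simp add: Pexp_def scale_def)

lemma leaves_list_hd: "x \<in> leaves_list i cs \<Longrightarrow> \<exists>j p. x = j # p \<and> i \<le> j"
  by (induction cs arbitrary: i) (auto, fastforce)

lemma finite_leaves: "finite (leaves t)" "finite (leaves_list i cs)"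
  by (induction t and i cs rule: leaves_leaves_list.induct) auto

lemma restr_inter: "\<forall>I. restr t I = restr t (I \<inter> leaves t)"
  "\<forall>I. restr_list i cs I = restr_list i cs (I \<inter> leaves_list i cs)"
proof (induction t and i cs rule: leaves_leaves_list.induct)
  case 1 then show ?case by auto
next
  case (2 cs) then show ?case by simp
next
  case (3 i) then show ?case by simp
next
  case (4 i c cs)
  show ?case
  proof
    fix I
    let ?J = "I \<inter> leaves_list i (c # cs)"
    have a: "{p. i # p \<in> ?J} \<inter> leaves c = {p. i # p \<in> I} \<inter> leaves c" by auto
    have "restr c {p. i # p \<in> ?J} = restr c {p. i # p \<in> I}"
      using 4(1) a by metis
    moreover have "?J \<inter> leaves_list (Suc i) cs = I \<inter> leaves_list (Suc i) cs"
      using leaves_list_hd[of _ "Suc i" cs] by auto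
    then have "restr_list (Suc i) cs ?J = restr_list (Suc i) cs I"
      using 4(2) by metis
    ultimately show "restr_list i (c # cs) I = restr_list i (c # cs) ?J" by simp
  qed
qed

lemma restr_PT: "reduced t \<longrightarrow> (\<forall>I. restr t I \<in> PT)"
  "(\<forall>c\<in>set cs. reduced c) \<longrightarrow> (\<forall>I. set (restr_list i cs I) \<subseteq> PT)"
proof (induction t and i cs rule: leaves_leaves_list.induct)
  case (2 cs) then show ?case by (auto intro: graft_PT)
qed auto

lemma deg_restr: "\<forall>I. deg (restr t I) \<le> nleaves t"
  "\<forall>I. sum_list (map deg (restr_list i cs I)) \<le> sum_list (map nleaves cs)"
proof (induction t and i cs rule: leaves_leaves_list.induct)
  case (2 cs) then show ?case by (simp add: deg_graft)
next
  case (4 i c cs) then show ?case by (simp add: add_mono)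
qed auto

lemma contract_simps[simp]: "contract None I = None" "contract (Some t) I = restr t I"
  by (auto simp: contract_def)

lemma L_simps[simp]: "L None = {}" "L (Some t) = leaves t"
  by (auto simp: L_def)

lemma contract_PT: "U \<in> PT \<Longrightarrow> contract U I \<in> PT"
  using restr_PT(1) by (cases U) auto

lemma deg_contract: "deg (contract U I) \<le> deg U"
  using deg_restr(1) by (cases U) auto

lemma filt_Cons: "filt (x # xs) = (case x of None \<Rightarrow> filt xs | Some t \<Rightarrow> t # filt xs)"
  by (cases x) auto

fun SP :: "nat \<Rightarrow> ptree option list \<Rightarrow> nat list set \<Rightarrow> nat list set list" where
  "SP i [] I = []"
| "SP i (None # us) I = {} # SP i us I"
| "SP i (Some t # us) I = {p \<in> leaves t. i # p \<in> I} # SP (Suc i) us I"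

fun CB :: "nat \<Rightarrow> ptree option list \<Rightarrow> nat list set list \<Rightarrow> nat list set" where
  "CB i [] Is = {}"
| "CB i (None # us) Is = CB i us (tl Is)"
| "CB i (Some t # us) Is = Cons i ` hd Is \<union> CB (Suc i) us (tl Is)"

abbreviation LA :: "ptree option list \<Rightarrow> nat list set list \<Rightarrow> bool" where
  "LA us Is \<equiv> list_all2 (\<lambda>I u. I \<subseteq> L u) Is us"

lemma SP_LA: "LA us (SP i us I)"
proof (induction us arbitrary: i)
  case (Cons u us) then show ?case by (cases u) auto
qed simp

lemma CB_SP: "CB i us (SP i us I) = I \<inter> leaves_list i (filt us)"
proof (induction us arbitrary: i)
  case (Cons u us) then show ?case by (cases u) auto
qed simp

lemma CB_sub: "LA us Is \<Longrightarrow> CB i us Is \<subseteq> leaves_list i (filt us)"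
proof (induction us arbitrary: i Is)
  case (Cons u us)
  then obtain J Is' where Is: "Is = J # Is'" "J \<subseteq> L u" "LA us Is'"
    by (auto simp: list_all2_Cons2)
  then show ?case using Cons.IH[of Is'] by (cases u) auto
qed simp

lemma SP_cong: "(\<And>j p. i \<le> j \<Longrightarrow> (j # p \<in> I) = (j # p \<in> I')) \<Longrightarrow> SP i us I = SP i us I'"
proof (induction us arbitrary: i)
  case (Cons u us)
  show ?case
  proof (cases u)
    case None then show ?thesis using Cons by simp
  next
    case (Some t)
    have "SP (Suc i) us I = SP (Suc i) us I'" using Cons by simp
    moreover have "{p \<in> leaves t. i # p \<in> I} = {p \<in> leaves t. i # p \<in> I'}" using Cons.prems by auto
    ultimately show ?thesis using Some by simp
  qed
qed simp

lemma SP_CB: "LA us Is \<Longrightarrow> SP i us (CB i us Is) = Is"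
proof (induction us arbitrary: i Is)
  case (Cons u us)
  then obtain J Is' where Is: "Is = J # Is'" "J \<subseteq> L u" "LA us Is'"
    by (auto simp: list_all2_Cons2)
  show ?case
  proof (cases u)
    case None
    then show ?thesis using Is Cons.IH[of Is'] by simp
  next
    case (Some t)
    have sub: "CB (Suc i) us Is' \<subseteq> leaves_list (Suc i) (filt us)" by (rule CB_sub[OF Is(3)])
    have "SP (Suc i) us (Cons i ` J \<union> CB (Suc i) us Is') = SP (Suc i) us (CB (Suc i) us Is')"
      by (rule SP_cong) auto
    moreover have "{p \<in> leaves t. i # p \<in> Cons i ` J \<union> CB (Suc i) us Is'} = J"
    proof -
      have "i # p \<notin> CB (Suc i) us Is'" for p using sub leaves_list_hd[of "i # p" "Suc i" "filt us"] by auto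
      then show ?thesis using Is Some by auto
    qed
    ultimately show ?thesis using Is Some Cons.IH[of Is'] by simp
  qed
qed simp

lemma filt_SP: "filt (map2 contract us (SP i us I)) = filt (restr_list i (filt us) I)"
proof (induction us arbitrary: i)
  case (Cons u us)
  show ?case
  proof (cases u)
    case None then show ?thesis using Cons by simp
  next
    case (Some t)
    have e: "{p \<in> leaves t. i # p \<in> I} = {p. i # p \<in> I} \<inter> leaves t" by auto
    have "restr t {p \<in> leaves t. i # p \<in> I} = restr t {p. i # p \<in> I}"
      unfolding e using restr_inter(1)[of t] by simp
    then show ?thesis using Some Cons.IH[of "Suc i"] by (simp add: filt_Cons split: option.split)
  qed
qed simp

definition big :: "ptree option list \<Rightarrow> bool" where "big us = (2 \<le> length (filt us))"

definition spl :: "ptree option list \<Rightarrow> nat list set \<Rightarrow> nat list set list" where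
  "spl us I = (if big us then SP 0 us I else map (\<lambda>u. if u = None then {} else I) us)"

definition comb :: "ptree option list \<Rightarrow> nat list set list \<Rightarrow> nat list set" where
  "comb us Is = (if big us then CB 0 us Is else \<Union> (set Is))"

lemma graft_big: "big us \<Longrightarrow> graft us = Some (Node (filt us))"
  unfolding big_def graft_filt by (cases "filt us" rule: remdups_adj.cases) auto

lemma set_filt_iff: "Some t \<in> set us \<longleftrightarrow> t \<in> set (filt us)"
proof (induction us)
  case (Cons a us) then show ?case by (cases a) auto
qed simp

lemma small_u: assumes "\<not> big us" "u \<in> set us" "u \<noteq> None" shows "u = graft us"
proof -
  obtain t where u: "u = Some t" using assms by auto
  then have "t \<in> set (filt us)" using assms set_filt_iff by metis
  then have "filt us = [t]" using assms(1) unfolding big_def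
    by (cases "filt us" rule: remdups_adj.cases) auto
  then show ?thesis using u by (simp add: graft_filt)
qed

lemma one_filt: "j < length us \<Longrightarrow> us ! j \<noteq> None \<Longrightarrow> 1 \<le> length (filt us)"
proof (induction us arbitrary: j)
  case (Cons a us) then show ?case by (cases a; cases j) auto
qed simp

lemma two_filt: "i < j \<Longrightarrow> j < length us \<Longrightarrow> us ! i \<noteq> None \<Longrightarrow> us ! j \<noteq> None \<Longrightarrow> 2 \<le> length (filt us)"
proof (induction us arbitrary: i j)
  case (Cons a us)
  show ?case
  proof (cases i)
    case 0
    then obtain j' where j: "j = Suc j'" using Cons.prems by (cases j) auto
    then have "1 \<le> length (filt us)" using one_filt[of j' us] Cons.prems by auto
    then show ?thesis using 0 Cons.prems by (cases a) auto
  next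
    case (Suc i')
    then obtain j' where j: "j = Suc j'" using Cons.prems by (cases j) auto
    then have "2 \<le> length (filt us)" using Cons.IH[of i' j'] Cons.prems Suc by auto
    then show ?thesis by (cases a) auto
  qed
qed simp

lemma map2_map: "map2 f us (map g us) = map (\<lambda>u. f u (g u)) us"
  by (induction us) auto

lemma filt_map_C: "filt (map (\<lambda>u. if u = None then None else C) us) = concat (replicate (length (filt us)) (filt [C]))"
proof (induction us)
  case (Cons a us) then show ?case by (cases a; cases C) auto
qed simp

lemma LA_sub: "LA us Is \<Longrightarrow> \<not> big us \<Longrightarrow> I \<in> set Is \<Longrightarrow> I \<subseteq> L (graft us)"
proof -
  assume la: "LA us Is" and nb: "\<not> big us" and I: "I \<in> set Is"
  then obtain i where i: "i < length Is" "I = Is ! i" by (metis in_set_conv_nth)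
  then have "I \<subseteq> L (us ! i)" "i < length us" using la by (auto simp: list_all2_conv_all_nth)
  moreover have "us ! i \<in> set us" using \<open>i < length us\<close> by simp
  ultimately show ?thesis
  proof (cases "us ! i = None")
    case False
    then have "us ! i = graft us" using small_u[OF nb, of "us ! i"] \<open>us ! i \<in> set us\<close> by simp
    then show ?thesis using \<open>I \<subseteq> L (us ! i)\<close> by simp
  qed simp
qed

lemma P1: assumes "I \<subseteq> L (graft us)" shows "LA us (spl us I) \<and> comb us (spl us I) = I"
proof (cases "big us")
  case True
  then show ?thesis using assms graft_big[OF True] SP_LA CB_SP
    by (auto simp: spl_def comb_def)
next
  case False
  have "\<forall>u\<in>set us. (if u = None then {} else I) \<subseteq> L u"
  proof
    fix u assume u: "u \<in> set us"
    show "(if u = None then {} else I) \<subseteq> L u"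
    proof (cases "u = None")
      case False
      then have "u = graft us" using small_u[OF \<open>\<not> big us\<close> u] by simp
      then show ?thesis using assms False by simp
    qed simp
  qed
  then have la: "LA us (spl us I)"
    unfolding spl_def using False by (simp add: list_all2_map1 list_all2_same)
  have "comb us (spl us I) = I"
  proof (cases "I = {}")
    case True then show ?thesis using False by (auto simp: comb_def spl_def)
  next
    case ne: False
    then have "graft us \<noteq> None" using assms by auto
    then obtain t where "graft us = Some t" by auto
    then have "filt us = [t]" using False unfolding big_def graft_filt
      by (cases "filt us" rule: remdups_adj.cases) auto
    then have "Some t \<in> set us" using set_filt_iff by fastforce
    then show ?thesis using False by (auto simp: comb_def spl_def)
  qed
  then show ?thesis using la by simp
qed

lemma P2: assumes "LA us Is" shows "comb us Is \<subseteq> L (graft us) \<and> spl us (comb us Is) = Is"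
proof (cases "big us")
  case True
  then show ?thesis using assms graft_big[OF True] SP_CB CB_sub
    by (auto simp: spl_def comb_def)
next
  case False
  have sub: "comb us Is \<subseteq> L (graft us)" using LA_sub[OF assms False] False by (auto simp: comb_def)
  have len: "length Is = length us" using assms by (simp add: list_all2_lengthD)
  have "spl us (\<Union> (set Is)) = Is"
  proof (rule nth_equalityI)
    show "length (spl us (\<Union> (set Is))) = length Is" using False len by (simp add: spl_def)
  next
    fix i assume "i < length (spl us (\<Union> (set Is)))"
    then have i: "i < length us" using False by (simp add: spl_def)
    have Ii: "Is ! i \<subseteq> L (us ! i)" using assms i by (simp add: list_all2_conv_all_nth)
    show "spl us (\<Union> (set Is)) ! i = Is ! i"
    proof (cases "us ! i = None")
      case True then show ?thesis using False i Ii by (simp add: spl_def)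
    next
      case nn: False
      have "\<Union> (set Is) = Is ! i"
      proof
        show "Is ! i \<subseteq> \<Union> (set Is)" using i len by (metis Union_upper nth_mem)
      next
        show "\<Union> (set Is) \<subseteq> Is ! i"
        proof
          fix x assume "x \<in> \<Union> (set Is)"
          then obtain j where j: "j < length Is" "x \<in> Is ! j" by (auto simp: in_set_conv_nth)
          have "Is ! j \<subseteq> L (us ! j)" using assms j by (simp add: list_all2_conv_all_nth)
          then have "us ! j \<noteq> None" using j by (cases "us ! j") auto
          then have "j = i" using two_filt[of i j us] two_filt[of j i us] nn i j len False
            by (auto simp: big_def) (metis linorder_neqE_nat)
          then show "x \<in> Is ! i" using j by simp
        qed
      qed
      then show ?thesis using False i nn by (auto simp: spl_def)
    qed
  qed
  then show ?thesis using sub False by (simp add: comb_def)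
qed

lemma P3: assumes "I \<subseteq> L (graft us)"
  shows "contract (graft us) I = graft (map2 contract us (spl us I))"
proof (cases "big us")
  case True
  have "contract (graft us) I = graft (restr_list 0 (filt us) I)"
    using graft_big[OF True] by simp
  also have "\<dots> = graft (map2 contract us (SP 0 us I))"
    by (rule graft_cong) (simp add: filt_SP)
  finally show ?thesis using True by (simp add: spl_def)
next
  case False
  let ?C = "contract (graft us) I"
  have "map2 contract us (spl us I) = map (\<lambda>u. if u = None then None else ?C) us"
    using False small_u[OF False] by (auto simp: spl_def map2_map)
  then have f: "filt (map2 contract us (spl us I)) = concat (replicate (length (filt us)) (filt [?C]))"
    by (simp add: filt_map_C)
  show ?thesis
  proof (cases "filt us")
    case Nil
    then have "graft us = None" by (simp add: graft_filt)
    then show ?thesis using f Nil by (simp add: graft_filt)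
  next
    case (Cons t r)
    then have "r = []" using False by (cases r) (auto simp: big_def)
    then have "filt (map2 contract us (spl us I)) = filt [?C]" using f Cons by simp
    then show ?thesis using graft_cong by (metis graft_single)
  qed
qed

lemma count_us: "card {Is. LA us Is \<and> graft (map2 contract us Is) = T} = pbinom (graft us) T"
proof -
  have "bij_betw (spl us) {I. I \<subseteq> L (graft us) \<and> contract (graft us) I = T}
      {Is. LA us Is \<and> graft (map2 contract us Is) = T}"
  proof (rule bij_betw_byWitness[where f' = "comb us"])
    show "\<forall>a\<in>{I. I \<subseteq> L (graft us) \<and> contract (graft us) I = T}. comb us (spl us a) = a"
      using P1 by (simp add: Ball_def)
    show "\<forall>a'\<in>{Is. LA us Is \<and> graft (map2 contract us Is) = T}. spl us (comb us a') = a'"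
      using P2 by (simp add: Ball_def)
    show "spl us ` {I. I \<subseteq> L (graft us) \<and> contract (graft us) I = T}
        \<subseteq> {Is. LA us Is \<and> graft (map2 contract us Is) = T}"
    proof clarify
      fix I assume "I \<subseteq> L (graft us)" "T = contract (graft us) I"
      then show "LA us (spl us I) \<and> graft (map2 contract us (spl us I)) = contract (graft us) I"
        using P1[where I=I and us=us] P3[where I=I and us=us] by simp
    qed
    show "comb us ` {Is. LA us Is \<and> graft (map2 contract us Is) = T}
        \<subseteq> {I. I \<subseteq> L (graft us) \<and> contract (graft us) I = T}"
    proof clarify
      fix Is assume "LA us Is" "T = graft (map2 contract us Is)"
      then show "comb us Is \<subseteq> L (graft us) \<and> contract (graft us) (comb us Is) = graft (map2 contract us Is)"
        using P2[where us=us and Is=Is] P3[where I="comb us Is" and us=us] by simp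
    qed
  qed
  then have "card {I. I \<subseteq> L (graft us) \<and> contract (graft us) I = T} =
      card {Is. LA us Is \<and> graft (map2 contract us Is) = T}" by (rule bij_betw_same_card)
  then show ?thesis unfolding pbinom_def by simp
qed

definition H1 :: "nat \<Rightarrow> ptree option \<Rightarrow> nat \<Rightarrow> complex" where
  "H1 k T m = (\<Sum>U\<in>{U\<in>PT. deg U = deg T + m}. of_nat (pbinom U T) * exp_k k U)"

definition Pairs :: "ptree option \<Rightarrow> nat \<Rightarrow> (ptree option \<times> nat list set) set" where
  "Pairs t j = {p. fst p \<in> PT \<and> deg (fst p) = deg t + j \<and> snd p \<subseteq> L (fst p) \<and> contract (fst p) (snd p) = t}"

definition phi :: "ptree option \<times> nat list set \<Rightarrow> ptree option \<times> nat" where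
  "phi p = (contract (fst p) (snd p), deg (fst p) - deg (contract (fst p) (snd p)))"

definition V :: "ptree option \<times> nat list set \<Rightarrow> bool" where
  "V p = (fst p \<in> PT \<and> snd p \<subseteq> L (fst p))"

definition TSN :: "nat \<Rightarrow> nat \<Rightarrow> ptree option list set" where
  "TSN k N = {us. length us = k \<and> set us \<subseteq> PT \<and> deg (graft us) = N}"

definition QS :: "nat \<Rightarrow> ptree option \<Rightarrow> nat \<Rightarrow> (ptree option \<times> nat list set) list set" where
  "QS k T m = {ps. length ps = k \<and> (\<forall>p\<in>set ps. V p) \<and> map phi ps \<in> ZS k T m}"

lemma finite_L: "finite (L U)"
  using finite_leaves(1) by (cases U) auto

lemma Pairs_Sigma: "Pairs t j = Sigma {U\<in>PT. deg U = deg t + j} (\<lambda>U. {I. I \<subseteq> L U \<and> contract U I = t})"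
  by (auto simp: Pairs_def)

lemma finite_Pairs: "finite (Pairs t j)"
proof -
  have "\<And>U. finite {I. I \<subseteq> L U \<and> contract U I = t}"
    by (rule finite_subset[of _ "Pow (L U)" for U]) (auto simp: finite_L)
  then show ?thesis unfolding Pairs_Sigma by (intro finite_SigmaI finite_PT_deg_eq)
qed

lemma H1_Pairs: "H1 k t j = (\<Sum>p\<in>Pairs t j. exp_k k (fst p))"
proof -
  have fin: "\<And>U. finite {I. I \<subseteq> L U \<and> contract U I = t}"
    by (rule finite_subset[of _ "Pow (L U)" for U]) (auto simp: finite_L)
  have "(\<Sum>U\<in>{U\<in>PT. deg U = deg t + j}. \<Sum>I\<in>{I. I \<subseteq> L U \<and> contract U I = t}. exp_k k U) =
     (\<Sum>(U,I)\<in>Pairs t j. exp_k k U)"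
    unfolding Pairs_Sigma by (rule sum.Sigma) (auto simp: finite_PT_deg_eq fin)
  then have "(\<Sum>p\<in>Pairs t j. exp_k k (fst p)) =
      (\<Sum>U\<in>{U\<in>PT. deg U = deg t + j}. \<Sum>I\<in>{I. I \<subseteq> L U \<and> contract U I = t}. exp_k k U)"
    by (simp add: case_prod_unfold)
  then show ?thesis by (simp add: H1_def pbinom_def)
qed

lemma prod_sum_lists:
  fixes g :: "'a \<Rightarrow> complex"
  assumes "\<forall>z\<in>set zs. finite (B z)"
  shows "finite {ps. list_all2 (\<lambda>p z. p \<in> B z) ps zs} \<and>
    prod_list (map (\<lambda>z. \<Sum>p\<in>B z. g p) zs) = (\<Sum>ps\<in>{ps. list_all2 (\<lambda>p z. p \<in> B z) ps zs}. prod_list (map g ps))"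
  using assms
proof (induction zs)
  case Nil
  have "{ps. list_all2 (\<lambda>p z. p \<in> B z) ps []} = {[]}" by auto
  then show ?case by simp
next
  case (Cons z zs)
  let ?S = "{ps. list_all2 (\<lambda>p z. p \<in> B z) ps zs}"
  have eq: "{ps. list_all2 (\<lambda>p z. p \<in> B z) ps (z # zs)} = (\<lambda>(p,ps). p # ps) ` (B z \<times> ?S)"
    by (auto simp: list_all2_Cons2 image_iff)
  have inj: "inj_on (\<lambda>(p,ps). p # ps) (B z \<times> ?S)" by (auto simp: inj_on_def)
  have fz: "finite (B z)" and IH: "finite ?S"
      "prod_list (map (\<lambda>z. \<Sum>p\<in>B z. g p) zs) = (\<Sum>ps\<in>?S. prod_list (map g ps))"
    using Cons by auto
  have "(\<Sum>ps\<in>{ps. list_all2 (\<lambda>p z. p \<in> B z) ps (z # zs)}. prod_list (map g ps)) =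
      (\<Sum>x\<in>B z \<times> ?S. g (fst x) * prod_list (map g (snd x)))"
    unfolding eq by (subst sum.reindex[OF inj]) (simp add: case_prod_unfold)
  also have "\<dots> = (\<Sum>p\<in>B z. \<Sum>ps\<in>?S. g p * prod_list (map g ps))"
    by (subst sum.cartesian_product) (simp add: case_prod_unfold)
  also have "\<dots> = (\<Sum>p\<in>B z. g p) * (\<Sum>ps\<in>?S. prod_list (map g ps))"
    by (rule sum_product[symmetric])
  finally show ?case using eq fz IH by simp
qed

lemma Pairs_iff: "p \<in> Pairs t j \<longleftrightarrow> (t, j) = phi p \<and> V p"
  using deg_contract[of "fst p" "snd p"] unfolding Pairs_def phi_def V_def by auto

lemma list_all2_Pairs:
  "list_all2 (\<lambda>p z. p \<in> Pairs (fst z) (snd z)) ps zs \<longleftrightarrow> zs = map phi ps \<and> (\<forall>p\<in>set ps. V p)"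
proof (induction ps arbitrary: zs)
  case Nil then show ?case by auto
next
  case (Cons p ps)
  show ?case
  proof (cases zs)
    case Nil then show ?thesis by simp
  next
    case (Cons z zs')
    then show ?thesis using Cons.IH[of zs'] Pairs_iff[of p "fst z" "snd z"] by auto
  qed
qed

lemma diff_sum: "(\<forall>x\<in>set xs. g x \<le> (f x :: nat)) \<Longrightarrow>
  sum_list (map (\<lambda>x. f x - g x) xs) = sum_list (map f xs) - sum_list (map g xs) \<and>
  sum_list (map g xs) \<le> sum_list (map f xs)"
  by (induction xs) auto

lemma key:
  assumes V: "\<forall>p\<in>set ps. V p"
  shows "map phi ps \<in> ZS k T m \<longleftrightarrow> length ps = k \<and> graft (map (\<lambda>p. contract (fst p) (snd p)) ps) = T
     \<and> deg (graft (map fst ps)) = deg T + m"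
proof -
  let ?c = "\<lambda>p. contract (fst p) (snd p)"
  have d: "\<forall>p\<in>set ps. deg (?c p) \<le> deg (fst p)" using deg_contract by auto
  have s: "sum_list (map snd (map phi ps)) = deg (graft (map fst ps)) - deg (graft (map ?c ps))"
    "deg (graft (map ?c ps)) \<le> deg (graft (map fst ps))"
    using diff_sum[OF d] by (simp_all add: phi_def deg_graft o_def)
  have pt: "set (map fst (map phi ps)) \<subseteq> PT"
    using V contract_PT by (auto simp: phi_def V_def)
  have f: "map fst (map phi ps) = map ?c ps" by (simp add: phi_def)
  have "map phi ps \<in> ZS k T m \<longleftrightarrow> length ps = k \<and> graft (map ?c ps) = T \<and>
     deg (graft (map fst ps)) - deg (graft (map ?c ps)) = m"
    using pt unfolding ZS_def mem_Collect_eq length_map f s(1) by blast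
  then show ?thesis using s(2) by auto
qed

lemma finite_TSN: "finite (TSN k N)"
proof -
  have "TSN k N \<subseteq> {us. set us \<subseteq> {U\<in>PT. deg U \<le> N} \<and> length us = k}"
  proof
    fix us assume us: "us \<in> TSN k N"
    have "\<forall>u\<in>set us. deg u \<le> N"
    proof
      fix u assume "u \<in> set us"
      then have "deg u \<le> sum_list (map deg us)" by (simp add: member_le_sum_list)
      then show "deg u \<le> N" using us by (simp add: TSN_def deg_graft)
    qed
    then show "us \<in> {us. set us \<subseteq> {U\<in>PT. deg U \<le> N} \<and> length us = k}" using us by (auto simp: TSN_def)
  qed
  then show ?thesis by (rule finite_subset) (intro finite_lists_length_eq finite_PT_deg)
qed

lemma card_fiber:
  assumes us: "us \<in> TSN k (deg T + m)"
  shows "card {ps \<in> QS k T m. map fst ps = us} = pbinom (graft us) T"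
proof -
  have l: "length us = k" and pt: "set us \<subseteq> PT" and dg: "deg (graft us) = deg T + m"
    using us by (auto simp: TSN_def)
  have "bij_betw (map snd) {ps \<in> QS k T m. map fst ps = us} {Is. LA us Is \<and> graft (map2 contract us Is) = T}"
  proof (rule bij_betw_byWitness[where f' = "zip us"])
    show "\<forall>a\<in>{ps \<in> QS k T m. map fst ps = us}. zip us (map snd a) = a"
      by (auto simp: zip_map_fst_snd)
    show "\<forall>a'\<in>{Is. LA us Is \<and> graft (map2 contract us Is) = T}. map snd (zip us a') = a'"
      by (auto simp: list_all2_lengthD)
    show "map snd ` {ps \<in> QS k T m. map fst ps = us} \<subseteq> {Is. LA us Is \<and> graft (map2 contract us Is) = T}"
    proof clarify
      fix ps assume ps: "ps \<in> QS k T m" "us = map fst ps"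
      have V: "\<forall>p\<in>set ps. V p" using ps by (simp add: QS_def)
      have "LA (map fst ps) (map snd ps)"
        using V by (simp add: list_all2_map1 list_all2_map2 list_all2_same V_def)
      moreover have "map2 contract (map fst ps) (map snd ps) = map (\<lambda>p. contract (fst p) (snd p)) ps"
        by (simp add: zip_map_fst_snd case_prod_unfold)
      moreover have "graft (map (\<lambda>p. contract (fst p) (snd p)) ps) = T"
        using ps key[OF V] by (simp add: QS_def)
      ultimately show "LA (map fst ps) (map snd ps) \<and> graft (map2 contract (map fst ps) (map snd ps)) = T"
        by simp
    qed
    show "zip us ` {Is. LA us Is \<and> graft (map2 contract us Is) = T} \<subseteq> {ps \<in> QS k T m. map fst ps = us}"
    proof (rule image_subsetI)
      fix Is assume "Is \<in> {Is. LA us Is \<and> graft (map2 contract us Is) = T}"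
      then have la: "LA us Is" and g: "T = graft (map2 contract us Is)" by auto
      have len: "length Is = length us" using la by (simp add: list_all2_lengthD)
      have V: "\<forall>p\<in>set (zip us Is). V p"
      proof
        fix p assume "p \<in> set (zip us Is)"
        then obtain i where i: "i < length us" "p = (us ! i, Is ! i)" using len by (auto simp: set_zip)
        then show "V p" using la pt by (auto simp: V_def list_all2_conv_all_nth)
      qed
      have "map phi (zip us Is) \<in> ZS k T m"
        using key[OF V] len l dg g by (simp add: case_prod_unfold)
      then show "zip us Is \<in> {ps \<in> QS k T m. map fst ps = us}"
        using V len l by (simp add: QS_def)
    qed
  qed
  then have "card {ps \<in> QS k T m. map fst ps = us} = card {Is. LA us Is \<and> graft (map2 contract us Is) = T}"
    by (rule bij_betw_same_card)
  then show ?thesis using count_us by simp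
qed

lemma LHS: "Om k (H1 k) T m =
  (\<Sum>us\<in>TSN k (deg T + m). of_nat (pbinom (graft us) T) * prod_list (map (exp_k k) us))"
proof -
  let ?g = "\<lambda>p. exp_k k (fst p)"
  let ?h = "\<lambda>ps. prod_list (map ?g ps)"
  let ?PS = "\<lambda>zs. {ps. list_all2 (\<lambda>p z. p \<in> Pairs (fst z) (snd z)) ps zs}"
  have fin: "\<forall>z\<in>set zs. finite (Pairs (fst z) (snd z))" for zs :: "(ptree option \<times> nat) list"
    using finite_Pairs by simp
  have finPS: "finite (?PS zs)" for zs using prod_sum_lists[OF fin[of zs], of ?g] by blast
  have 1: "Om k (H1 k) T m = (\<Sum>zs\<in>ZS k T m. \<Sum>ps\<in>?PS zs. ?h ps)"
    unfolding Om_def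
  proof (rule sum.cong[OF refl])
    fix zs assume "zs \<in> ZS k T m"
    have e: "map (\<lambda>(t,j). H1 k t j) zs = map (\<lambda>z. \<Sum>p\<in>Pairs (fst z) (snd z). ?g p) zs"
      by (simp add: H1_Pairs case_prod_unfold)
    have "prod_list (map (\<lambda>(t, j). H1 k t j) zs) = prod_list (map (\<lambda>z. \<Sum>p\<in>Pairs (fst z) (snd z). ?g p) zs)"
      unfolding e ..
    also have "\<dots> = (\<Sum>ps\<in>?PS zs. ?h ps)"
      by (rule conjunct2[OF prod_sum_lists[OF fin[of zs]]])
    finally show "prod_list (map (\<lambda>(t, j). H1 k t j) zs) = (\<Sum>ps\<in>?PS zs. ?h ps)" .
  qed
  have 2: "(\<Sum>zs\<in>ZS k T m. \<Sum>ps\<in>?PS zs. ?h ps) = (\<Sum>(zs,ps)\<in>Sigma (ZS k T m) ?PS. ?h ps)"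
    by (rule sum.Sigma) (auto simp: finite_ZS finPS)
  have inj: "inj_on snd (Sigma (ZS k T m) ?PS)"
    by (rule inj_onI) (auto simp: list_all2_Pairs)
  have img: "snd ` Sigma (ZS k T m) ?PS = QS k T m"
  proof
    show "snd ` Sigma (ZS k T m) ?PS \<subseteq> QS k T m"
      by (auto simp: list_all2_Pairs QS_def ZS_def)
    show "QS k T m \<subseteq> snd ` Sigma (ZS k T m) ?PS"
    proof
      fix ps assume ps: "ps \<in> QS k T m"
      then have "(map phi ps, ps) \<in> Sigma (ZS k T m) ?PS"
        by (auto simp: list_all2_Pairs QS_def)
      then show "ps \<in> snd ` Sigma (ZS k T m) ?PS" by force
    qed
  qed
  have 3: "(\<Sum>(zs,ps)\<in>Sigma (ZS k T m) ?PS. ?h ps) = (\<Sum>ps\<in>QS k T m. ?h ps)"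
    unfolding img[symmetric] by (subst sum.reindex[OF inj]) (simp add: case_prod_unfold)
  have finQS: "finite (QS k T m)"
    unfolding img[symmetric] by (intro finite_imageI finite_SigmaI finite_ZS finPS)
  have sub: "map fst ` QS k T m \<subseteq> TSN k (deg T + m)"
  proof
    fix us assume "us \<in> map fst ` QS k T m"
    then obtain ps where ps: "ps \<in> QS k T m" "us = map fst ps" by auto
    then have V: "\<forall>p\<in>set ps. V p" by (simp add: QS_def)
    then show "us \<in> TSN k (deg T + m)"
      using ps key[OF V] by (auto simp: TSN_def QS_def V_def)
  qed
  have 4: "(\<Sum>ps\<in>QS k T m. ?h ps) =
      (\<Sum>us\<in>TSN k (deg T + m). \<Sum>ps\<in>{ps \<in> QS k T m. map fst ps = us}. ?h ps)"
    by (rule sum.group[OF finQS finite_TSN sub, symmetric])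
  have 5: "(\<Sum>ps\<in>{ps \<in> QS k T m. map fst ps = us}. ?h ps) =
      of_nat (pbinom (graft us) T) * prod_list (map (exp_k k) us)" if us: "us \<in> TSN k (deg T + m)" for us
  proof -
    have "(\<Sum>ps\<in>{ps \<in> QS k T m. map fst ps = us}. ?h ps) =
        (\<Sum>ps\<in>{ps \<in> QS k T m. map fst ps = us}. prod_list (map (exp_k k) us))"
    proof (rule sum.cong[OF refl])
      fix ps assume "ps \<in> {ps \<in> QS k T m. map fst ps = us}"
      then have "us = map fst ps" by simp
      then show "?h ps = prod_list (map (exp_k k) us)" by (simp add: o_def)
    qed
    then show ?thesis using card_fiber[OF us] by simp
  qed
  show ?thesis using 1 2 3 4 5 by simp
qed

lemma RHS: assumes k: "2 \<le> k"
  shows "of_nat k ^ (deg T + m) * H1 k T m =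
  (\<Sum>us\<in>TSN k (deg T + m). of_nat (pbinom (graft us) T) * prod_list (map (exp_k k) us))"
proof -
  let ?A = "{U\<in>PT. deg U = deg T + m}"
  have "of_nat k ^ (deg T + m) * H1 k T m = (\<Sum>U\<in>?A. of_nat (pbinom U T) * omega k (\<lambda>_. exp_k k) U)"
    unfolding H1_def sum_distrib_left
    by (rule sum.cong[OF refl]) (simp add: exp_omega[OF k])
  also have "\<dots> = (\<Sum>U\<in>?A. \<Sum>us\<in>{us \<in> TSN k (deg T + m). graft us = U}.
       of_nat (pbinom (graft us) T) * prod_list (map (exp_k k) us))"
  proof (rule sum.cong[OF refl])
    fix U assume U: "U \<in> ?A"
    have "TS k U = {us \<in> TSN k (deg T + m). graft us = U}"
      using U by (auto simp: TS_def TSN_def)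
    then show "of_nat (pbinom U T) * omega k (\<lambda>_. exp_k k) U =
        (\<Sum>us\<in>{us \<in> TSN k (deg T + m). graft us = U}. of_nat (pbinom (graft us) T) * prod_list (map (exp_k k) us))"
      unfolding omega_list sum_distrib_left by (intro sum.cong) auto
  qed
  also have "\<dots> = (\<Sum>us\<in>TSN k (deg T + m). of_nat (pbinom (graft us) T) * prod_list (map (exp_k k) us))"
  proof (rule sum.group[OF finite_TSN finite_PT_deg_eq])
    show "graft ` TSN k (deg T + m) \<subseteq> ?A" by (auto simp: TSN_def graft_PT)
  qed
  finally show ?thesis .
qed

lemma H1_eq: "2 \<le> k \<Longrightarrow> Om k (H1 k) T m = of_nat k ^ (deg T + m) * H1 k T m"
  using LHS RHS by simp

lemma PT_deg0: "{U\<in>PT. deg U = 0} = {None}" using deg0 by auto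
lemma PT_deg1: "{U\<in>PT. deg U = 1} = {Some Leaf}" "{U\<in>PT. deg U = Suc 0} = {Some Leaf}" using deg1 by auto

lemma H1_base: assumes k: "2 \<le> k"
  shows "H1 k None 0 = 1" "H1 k (Some Leaf) 0 = 1" "H1 k None 1 = 1"
proof -
  have P: "exp_k k None = 1" "exp_k k (Some Leaf) = 1" using exp_k_P[OF k] by (auto simp: Pexp_def)
  have e1: "{I. I \<subseteq> L None \<and> contract None I = None} = {{}}" by auto
  have e2: "{I. I \<subseteq> L (Some Leaf) \<and> contract (Some Leaf) I = Some Leaf} = {{[]}}" by auto
  have e3: "{I. I \<subseteq> L (Some Leaf) \<and> contract (Some Leaf) I = None} = {{}}" by auto
  have p1: "pbinom None None = 1" unfolding pbinom_def e1 by simp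
  have p2: "pbinom (Some Leaf) (Some Leaf) = 1" unfolding pbinom_def e2 by simp
  have p3: "pbinom (Some Leaf) None = 1" unfolding pbinom_def e3 by simp
  show "H1 k None 0 = 1" unfolding H1_def using P p1 by (simp add: PT_deg0)
  show "H1 k (Some Leaf) 0 = 1" unfolding H1_def using P p2 by (simp add: PT_deg1)
  show "H1 k None 1 = 1" unfolding H1_def using P p3 by (simp add: PT_deg1)
qed

theorem corollary4p3:
  fixes k n m :: nat and T :: "ptree option"
  assumes "2 \<le> k" and "T \<in> PT" and "deg T = n"
  shows "exp_k k T / fact m =
    (\<Sum>U\<in>{U\<in>PT. deg U = n + m}. of_nat (pbinom U T) * exp_k k U)"
proof -
  have P: "exp_k k None = 1" "exp_k k (Some Leaf) = 1" using exp_k_P[OF assms(1)] by (auto simp: Pexp_def)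
  have "(\<lambda>t j. exp_k k t / fact j) T m = H1 k T m"
  proof (rule Om_unique[OF assms(1)])
    show "\<And>T m. T \<in> PT \<Longrightarrow> Om k (\<lambda>t j. exp_k k t / fact j) T m =
        of_nat k ^ (deg T + m) * (exp_k k T / fact m)"
      by (rule Om_fact) (use exp_omega[OF assms(1)] in auto)
    show "\<And>T m. T \<in> PT \<Longrightarrow> Om k (H1 k) T m = of_nat k ^ (deg T + m) * H1 k T m"
      using H1_eq[OF assms(1)] by simp
  qed (use P H1_base[OF assms(1)] assms(2) in auto)
  then show ?thesis using assms(3) by (simp add: H1_def)
qed

end
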